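(* The approximation guarantee $(1/n)^n$ of the generalized student-proposing deferred acceptance algorithm with the HERF method is tight even when $|F|=2$: for every number of students $n$, the infimum over instances with $n$ students and $|F|=2$ of $\mathsf{ProS}(\mathsf{Alg}(\mathcal I);\mathcal I)/\max_\pi\mathsf{ProS}(\pi;\mathcal I)$ is at most $(1/n)^n$.
   Context: Model: students $N$ ($|N|=n$); colleges $M$, each college $c$ with positive integer capacity $x_c$ and strict preference $\succ_c$ over $N$; features $F$; utilities $u_s^f:M\to[0,1]$; for each student $s$ an independent distribution $\mu_s$ over weight vectors $w_s$ ($w_s^f\ge0$, $\sum_f w_s^f=1$). For realized $w_s$, $c\succeq_s^{w_s}c'$ iff $\sum_f w_s^fu_s^f(c)\ge\sum_f w_s^fu_s^f(c')$, strict version $\succ_s^{w_s}$; $\mathsf{null}$ ranked below any college. A matching $\pi$ gives each student at most one college and each college at most $x_c$ students; it is (weakly) stable for realized weights if no pair $(s,c)$ has $c\succ_s^{w_s}\pi(s)$ and either $|\pi(c)|<x_c$ or some $s'\in\pi(c)$ with $s\succ_c s'$. $\mathsf{ProS}(\pi;\mathcal I)$ = probability over independent $w_s\sim\mu_s$ that $\pi$ is stable. Generalized student-proposing DA: all students start unmatched with $R_s=\emptyset$; while some unmatched student $s$ has $R_s\ne M$, each such student proposes to $\mathsf{Next}(s,R_s)\notin R_s$; each college keeps its $x_c$ most preferred students among those it holds and its new proposers and rejects the rest (rejected students add the college to $R_s$ and become unmatched). HERF: $\mathsf{Next}$ returns a college in $\arg\max_{c\notin R_s}\Pr[c\succeq_s^{w_s}c'\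 \forall c'\notin R_s,c'\ne c]$. *)

theory Defs
  imports "HOL-Probability.Probability"
begin

text \<open>
Students are N = {0..<n} (nat), colleges are a finite set M of nats,
features F = UNIV :: bool (so |F| = 2). A weight vector (w^True, w^False) with
nonnegative entries summing to 1 is represented by the real number w = w^True in [0,1],
w^False = 1 - w. College c's strict preference is the relation r c:
(s, s') in r c means s is preferred to s' by c. A matching is pi :: nat => nat option
(None = null).
\<close>

definition students :: "nat \<Rightarrow> nat set" where
  "students n = {0..<n}"

definition valid_instance ::
  "nat \<Rightarrow> nat set \<Rightarrow> (nat \<Rightarrow> nat) \<Rightarrow> (nat \<Rightarrow> (nat \<times> nat) set)
   \<Rightarrow> (nat \<Rightarrow> bool \<Rightarrow> nat \<Rightarrow> real) \<Rightarrow> (nat \<Rightarrow> real measure) \<Rightarrow> bool" where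
  "valid_instance n M x r u \<mu> \<longleftrightarrow>
     finite M \<and>
     (\<forall>c\<in>M. x c \<ge> 1) \<and>
     (\<forall>c\<in>M. r c \<subseteq> students n \<times> students n \<and> strict_linear_order_on (students n) (r c)) \<and>
     (\<forall>s\<in>students n. \<forall>f c. c \<in> M \<longrightarrow> 0 \<le> u s f c \<and> u s f c \<le> 1) \<and>
     (\<forall>s\<in>students n. prob_space (\<mu> s) \<and> sets (\<mu> s) = sets borel \<and>
        (AE w in \<mu> s. 0 \<le> w \<and> w \<le> 1))"

definition score :: "(nat \<Rightarrow> bool \<Rightarrow> nat \<Rightarrow> real) \<Rightarrow> nat \<Rightarrow> real \<Rightarrow> nat \<Rightarrow> real" where
  "score u s w c = w * u s True c + (1 - w) * u s False c"

definition sprefers :: "(nat \<Rightarrow> bool \<Rightarrow> nat \<Rightarrow> real) \<Rightarrow> nat \<Rightarrow> real \<Rightarrow> nat \<Rightarrow> nat option \<Rightarrow> bool" where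
  "sprefers u s w c opt = (case opt of None \<Rightarrow> True | Some c' \<Rightarrow> score u s w c > score u s w c')"

definition is_matching :: "nat \<Rightarrow> nat set \<Rightarrow> (nat \<Rightarrow> nat) \<Rightarrow> (nat \<Rightarrow> nat option) \<Rightarrow> bool" where
  "is_matching n M x \<pi> \<longleftrightarrow>
     (\<forall>s. s \<notin> students n \<longrightarrow> \<pi> s = None) \<and>
     (\<forall>s c. \<pi> s = Some c \<longrightarrow> c \<in> M) \<and>
     (\<forall>c\<in>M. card {s\<in>students n. \<pi> s = Some c} \<le> x c)"

definition stable_for ::
  "nat \<Rightarrow> nat set \<Rightarrow> (nat \<Rightarrow> nat) \<Rightarrow> (nat \<Rightarrow> (nat \<times> nat) set)
   \<Rightarrow> (nat \<Rightarrow> bool \<Rightarrow> nat \<Rightarrow> real) \<Rightarrow> (nat \<Rightarrow> nat option) \<Rightarrow> (nat \<Rightarrow> real) \<Rightarrow> bool" where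
  "stable_for n M x r u \<pi> w \<longleftrightarrow>
     \<not> (\<exists>s\<in>students n. \<exists>c\<in>M. sprefers u s (w s) c (\<pi> s) \<and>
          (card {s'\<in>students n. \<pi> s' = Some c} < x c \<or>
           (\<exists>s'\<in>students n. \<pi> s' = Some c \<and> (s, s') \<in> r c)))"

definition ProS ::
  "nat \<Rightarrow> nat set \<Rightarrow> (nat \<Rightarrow> nat) \<Rightarrow> (nat \<Rightarrow> (nat \<times> nat) set)
   \<Rightarrow> (nat \<Rightarrow> bool \<Rightarrow> nat \<Rightarrow> real) \<Rightarrow> (nat \<Rightarrow> real measure) \<Rightarrow> (nat \<Rightarrow> nat option) \<Rightarrow> real" where
  "ProS n M x r u \<mu> \<pi> =
     measure (PiM (students n) \<mu>) {w \<in> space (PiM (students n) \<mu>). stable_for n M x r u \<pi> w}"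

definition OPT ::
  "nat \<Rightarrow> nat set \<Rightarrow> (nat \<Rightarrow> nat) \<Rightarrow> (nat \<Rightarrow> (nat \<times> nat) set)
   \<Rightarrow> (nat \<Rightarrow> bool \<Rightarrow> nat \<Rightarrow> real) \<Rightarrow> (nat \<Rightarrow> real measure) \<Rightarrow> real" where
  "OPT n M x r u \<mu> = Max (ProS n M x r u \<mu> ` {\<pi>. is_matching n M x \<pi>})"

definition herf_prob ::
  "nat set \<Rightarrow> (nat \<Rightarrow> bool \<Rightarrow> nat \<Rightarrow> real) \<Rightarrow> (nat \<Rightarrow> real measure) \<Rightarrow> nat \<Rightarrow> nat set \<Rightarrow> nat \<Rightarrow> real" where
  "herf_prob M u \<mu> s R c =
     measure (\<mu> s) {w \<in> space (\<mu> s). \<forall>c'\<in>M - R. c' \<noteq> c \<longrightarrow> score u s w c' \<le> score u s w c}"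

text \<open>A Next function implementing HERF (with arbitrary tie-breaking).\<close>
definition herf_rule ::
  "nat \<Rightarrow> nat set \<Rightarrow> (nat \<Rightarrow> bool \<Rightarrow> nat \<Rightarrow> real) \<Rightarrow> (nat \<Rightarrow> real measure)
   \<Rightarrow> (nat \<Rightarrow> nat set \<Rightarrow> nat) \<Rightarrow> bool" where
  "herf_rule n M u \<mu> nx \<longleftrightarrow>
     (\<forall>s\<in>students n. \<forall>R. R \<subseteq> M \<and> R \<noteq> M \<longrightarrow>
        nx s R \<in> M - R \<and> (\<forall>c\<in>M - R. herf_prob M u \<mu> s R c \<le> herf_prob M u \<mu> s R (nx s R)))"

text \<open>DA state: (held, R) where held c = students currently held by college c,
  R s = colleges that have rejected s.\<close>
type_synonym da_state = "(nat \<Rightarrow> nat set) \<times> (nat \<Rightarrow> nat set)"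

definition keep :: "(nat \<Rightarrow> nat) \<Rightarrow> (nat \<Rightarrow> (nat \<times> nat) set) \<Rightarrow> nat \<Rightarrow> nat set \<Rightarrow> nat set" where
  "keep x r c S = {s\<in>S. card {s'\<in>S. (s', s) \<in> r c} < x c}"

definition da_step ::
  "nat \<Rightarrow> nat set \<Rightarrow> (nat \<Rightarrow> nat) \<Rightarrow> (nat \<Rightarrow> (nat \<times> nat) set)
   \<Rightarrow> (nat \<Rightarrow> nat set \<Rightarrow> nat) \<Rightarrow> da_state \<Rightarrow> da_state" where
  "da_step n M x r nx st =
     (let held = fst st; R = snd st;
          P = {s\<in>students n. (\<forall>c\<in>M. s \<notin> held c) \<and> R s \<noteq> M};
          cand = (\<lambda>c. held c \<union> {s\<in>P. nx s (R s) = c});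
          held' = (\<lambda>c. if c \<in> M then keep x r c (cand c) else {});
          R' = (\<lambda>s. R s \<union> {c\<in>M. s \<in> cand c - held' c})
      in (held', R'))"

definition da_init :: da_state where
  "da_init = ((\<lambda>c. {}), (\<lambda>s. {}))"

definition state_matching :: "nat set \<Rightarrow> da_state \<Rightarrow> nat \<Rightarrow> nat option" where
  "state_matching M st s =
     (if \<exists>c\<in>M. s \<in> fst st c then Some (THE c. c \<in> M \<and> s \<in> fst st c) else None)"

text \<open>The DA terminates within n*|M|+1 rounds (each non-final round rejects a new
  (student, college) pair), after which da_step is the identity; we iterate enough rounds.\<close>
definition alg_out ::
  "nat \<Rightarrow> nat set \<Rightarrow> (nat \<Rightarrow> nat) \<Rightarrow> (nat \<Rightarrow> (nat \<times> nat) set)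
   \<Rightarrow> (nat \<Rightarrow> nat set \<Rightarrow> nat) \<Rightarrow> nat \<Rightarrow> nat option" where
  "alg_out n M x r nx = state_matching M ((da_step n M x r nx ^^ (n * card M + 2)) da_init)"

end

theory Submission
  imports Defs
begin


definition tt :: "nat \<Rightarrow> nat \<Rightarrow> real" where "tt n c = real c / real n"
definition uu :: "nat \<Rightarrow> nat \<Rightarrow> bool \<Rightarrow> nat \<Rightarrow> real" where
  "uu n s f c = (if f then (1 + 2 * tt n c - (tt n c)^2) / 2 else (1 - (tt n c)^2) / 2)"
definition SS :: "nat \<Rightarrow> nat \<Rightarrow> nat \<Rightarrow> (nat \<times> nat) set" where
  "SS n K s = ({0..<n} \<times> {0..<K}) \<union> {(s, K)}"
definition mu :: "nat \<Rightarrow> nat \<Rightarrow> nat \<Rightarrow> real measure" where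
  "mu n K s = distr (measure_pmf (pmf_of_set (SS n K s))) borel (\<lambda>p. tt n (fst p))"
definition topst :: "nat \<Rightarrow> nat \<Rightarrow> nat" where "topst n c = (if c = 0 then n - 1 else c - 1)"
definition key :: "nat \<Rightarrow> nat \<Rightarrow> nat \<Rightarrow> nat" where
  "key n c s = (if s = c then n + 1 else if s = topst n c then 0 else s + 1)"
definition rr :: "nat \<Rightarrow> nat \<Rightarrow> (nat \<times> nat) set" where
  "rr n c = {(s, s'). s < n \<and> s' < n \<and> key n c s < key n c s'}"

lemma tt_bounds: "c < n \<Longrightarrow> 0 \<le> tt n c \<and> tt n c \<le> 1"
  by (simp add: tt_def)

lemma score_uu: "score (uu n) s w c = (1 - (tt n c)^2 + 2 * w * tt n c) / 2"
  unfolding score_def uu_def by (simp add: field_simps power2_eq_square)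

lemma tt_inj: "c < n \<Longrightarrow> j < n \<Longrightarrow> tt n c = tt n j \<Longrightarrow> c = j"
  by (simp add: tt_def)

lemma score_strict: "c < n \<Longrightarrow> j < n \<Longrightarrow> c \<noteq> j \<Longrightarrow>
   score (uu n) s (tt n j) c < score (uu n) s (tt n j) j"
proof -
  assume a: "c < n" "j < n" "c \<noteq> j"
  have "tt n c \<noteq> tt n j" using a tt_inj by blast
  hence "0 < (tt n j - tt n c)^2" by simp
  moreover have "score (uu n) s (tt n j) j - score (uu n) s (tt n j) c = (tt n j - tt n c)^2 / 2"
    by (simp add: score_uu power2_eq_square algebra_simps divide_simps)
  ultimately show ?thesis by linarith
qed

lemma SS_fin: "finite (SS n K s)" by (simp add: SS_def)
lemma SS_ne: "SS n K s \<noteq> {}" by (simp add: SS_def)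

lemma prob_mu: "prob_space (mu n K s)"
  unfolding mu_def by (rule prob_space.prob_space_distr) (auto simp: measure_pmf.prob_space_axioms)

lemma sets_mu[simp]: "sets (mu n K s) = sets borel" by (simp add: mu_def)
lemma space_mu[simp]: "space (mu n K s) = UNIV" by (simp add: mu_def)

lemma measure_mu: "A \<in> sets borel \<Longrightarrow>
   measure (mu n K s) A = card {p \<in> SS n K s. tt n (fst p) \<in> A} / card (SS n K s)"
  unfolding mu_def
  apply (subst measure_distr)
    apply simp apply simp
  apply (subst measure_pmf_of_set[OF SS_ne SS_fin])
  by (simp add: Int_def conj_commute)

lemma rr_order: "strict_linear_order_on (students n) (rr n c)"
  unfolding strict_linear_order_on_def trans_def irrefl_def total_on_def rr_def students_def
  by (auto simp: key_def split: if_splits)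



definition st1 :: "nat \<Rightarrow> da_state" where
  "st1 n = ((\<lambda>c. if c < n then {c} else {}), (\<lambda>s. {}))"

lemma keep_single: "keep x r c {c} = {c}" if "irrefl (r c)" "x c \<ge> 1"
proof -
  have "{s'. s' = c \<and> (s', c) \<in> r c} = {}" using that(1) by (auto simp: irrefl_def)
  then show ?thesis using that(2) by (auto simp: keep_def simp del: Collect_empty_eq)
qed

lemma irrefl_rr: "irrefl (rr n c)" by (auto simp: irrefl_def rr_def)

lemma da_step1:
  assumes "\<forall>s<n. nx s {} = s"
  shows "da_step n {0..<n} (\<lambda>_. 1) (rr n) nx da_init = st1 n"
proof -
  have cand: "{} \<union> {s \<in> {s \<in> students n. (\<forall>c\<in>{0..<n}. s \<notin> {}) \<and> {} \<noteq> {0..<n}}. nx s {} = c}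
     = (if c < n then {c} else {})" for c
    using assms by (auto simp: students_def)
  show ?thesis
    unfolding da_step_def da_init_def st1_def Let_def fst_conv snd_conv
    apply (simp only: cand)
    apply (auto simp: keep_single[OF irrefl_rr] fun_eq_iff)
    done
qed

lemma da_step_fix: "da_step n {0..<n} (\<lambda>_. 1) (rr n) nx (st1 n) = st1 n"
proof -
  have e: "{s \<in> students n. (\<forall>c\<in>{0..<n}. s \<notin> (if c < n then {c} else {})) \<and> Q s} = {}" for Q
    by (auto simp: students_def)
  show ?thesis
  unfolding da_step_def st1_def Let_def fst_conv snd_conv e
  by (auto simp: keep_single[OF irrefl_rr] fun_eq_iff students_def)
qed

lemma funpow_fix: "f a = a \<Longrightarrow> (f ^^ k) a = a"
  by (induction k) auto

lemma alg_out_eq: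
  assumes "\<forall>s<n. nx s {} = s"
  shows "alg_out n {0..<n} (\<lambda>_. 1) (rr n) nx = (\<lambda>s. if s < n then Some s else None)"
proof -
  have "(da_step n {0..<n} (\<lambda>_. 1) (rr n) nx ^^ (n * card {0..<n} + 2)) da_init = st1 n"
    apply (simp only: funpow_Suc_right numeral_2_eq_2 add_Suc_right o_apply da_step1[of n nx, OF assms])
    apply (simp only: da_step_fix)
    by (rule funpow_fix, rule da_step_fix)
  then show ?thesis
    unfolding alg_out_def state_matching_def st1_def by (auto simp: fun_eq_iff)
qed



definition Bset :: "nat \<Rightarrow> nat \<Rightarrow> nat \<Rightarrow> real set" where
  "Bset n s c = {w. \<forall>c'\<in>{0..<n}. c' \<noteq> c \<longrightarrow> score (uu n) s w c' \<le> score (uu n) s w c}"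

lemma Bset_borel: "Bset n s c \<in> sets borel"
proof -
  have "Bset n s c = {w \<in> space borel. \<forall>c'\<in>{0..<n}. c' \<noteq> c \<longrightarrow>
     (1 - (tt n c')^2 + 2 * w * tt n c') / 2 \<le> (1 - (tt n c)^2 + 2 * w * tt n c) / 2}"
    by (simp add: Bset_def score_uu)
  also have "\<dots> \<in> sets borel" by measurable
  finally show ?thesis .
qed

lemma SS_Bset: "s < n \<Longrightarrow> c < n \<Longrightarrow> {p \<in> SS n K s. tt n (fst p) \<in> Bset n s c} = {p \<in> SS n K s. fst p = c}"
proof (intro set_eqI iffI)
  fix p assume s: "s < n" and c: "c < n" and p: "p \<in> {p \<in> SS n K s. tt n (fst p) \<in> Bset n s c}"
  have j: "fst p < n" using p s by (auto simp: SS_def)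
  show "p \<in> {p \<in> SS n K s. fst p = c}"
  proof (rule ccontr)
    assume "p \<notin> {p \<in> SS n K s. fst p = c}"
    hence "fst p \<noteq> c" using p by auto
    hence "score (uu n) s (tt n (fst p)) c < score (uu n) s (tt n (fst p)) (fst p)"
      using score_strict[OF c j] by blast
    moreover have "score (uu n) s (tt n (fst p)) (fst p) \<le> score (uu n) s (tt n (fst p)) c"
      using p j \<open>fst p \<noteq> c\<close> unfolding Bset_def by auto
    ultimately show False by linarith
  qed
next
  fix p assume s: "s < n" and c: "c < n" and p: "p \<in> {p \<in> SS n K s. fst p = c}"
  have "score (uu n) s (tt n c) c' \<le> score (uu n) s (tt n c) c" if "c' < n" "c' \<noteq> c" for c'
    using score_strict[OF that(1) c that(2), of s] by linarith
  then show "p \<in> {p \<in> SS n K s. tt n (fst p) \<in> Bset n s c}" using p unfolding Bset_def by auto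
qed

lemma card_SS_c: "s < n \<Longrightarrow> c < n \<Longrightarrow> card {p \<in> SS n K s. fst p = c} = K + (if c = s then 1 else 0)"
proof -
  assume s: "s < n" and c: "c < n"
  have "{p \<in> SS n K s. fst p = c} = ({c} \<times> {0..<K}) \<union> (if c = s then {(s, K)} else {})"
    using s c by (auto simp: SS_def)
  moreover have "card (({c} \<times> {0..<K}) \<union> (if c = s then {(s, K)} else {})) = K + (if c = s then 1 else 0)"
    by (subst card_Un_disjoint) (auto simp: card_cartesian_product)
  ultimately show ?thesis by simp
qed

lemma card_SS: "s < n \<Longrightarrow> card (SS n K s) = n * K + 1"
  unfolding SS_def by (subst card_Un_disjoint) (auto simp: card_cartesian_product)



lemma herf_val: "s < n \<Longrightarrow> c < n \<Longrightarrow>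
  herf_prob {0..<n} (uu n) (mu n K) s {} c = real (K + (if c = s then 1 else 0)) / real (n * K + 1)"
proof -
  assume s: "s < n" and c: "c < n"
  have "herf_prob {0..<n} (uu n) (mu n K) s {} c = measure (mu n K s) (Bset n s c)"
    unfolding herf_prob_def Bset_def by simp
  also have "\<dots> = card {p \<in> SS n K s. tt n (fst p) \<in> Bset n s c} / card (SS n K s)"
    by (rule measure_mu[OF Bset_borel])
  also have "\<dots> = real (K + (if c = s then 1 else 0)) / real (n * K + 1)"
    using SS_Bset[OF s c] card_SS_c[OF s c] card_SS[OF s] by simp
  finally show ?thesis .
qed

lemma herf_nx: "herf_rule n {0..<n} (uu n) (mu n K) nx \<Longrightarrow> \<forall>s<n. nx s {} = s"
proof (intro allI impI)
  fix s assume h: "herf_rule n {0..<n} (uu n) (mu n K) nx" and s: "s < n"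
  have hs: "s \<in> students n" using s by (simp add: students_def)
  have ne: "{} \<noteq> {0..<n}" using s by auto
  have "nx s {} \<in> {0..<n} - {} \<and> (\<forall>c\<in>{0..<n} - {}. herf_prob {0..<n} (uu n) (mu n K) s {} c
          \<le> herf_prob {0..<n} (uu n) (mu n K) s {} (nx s {}))"
    using spec[OF bspec[OF h[unfolded herf_rule_def] hs], of "{}"] ne by simp
  hence a: "nx s {} < n" and b: "herf_prob {0..<n} (uu n) (mu n K) s {} s
          \<le> herf_prob {0..<n} (uu n) (mu n K) s {} (nx s {})" using s by auto
  have pos: "(0::real) < real (n*K+1)" by (simp only: of_nat_0_less_iff)
  show "nx s {} = s"
  proof (rule ccontr)
    assume ne: "nx s {} \<noteq> s"
    have "real (K + 1) / real (n * K + 1) \<le> real K / real (n * K + 1)"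
      using b herf_val[OF s s, of K] herf_val[OF s a, of K] ne by simp
    moreover have "real K / real (n * K + 1) < real (K + 1) / real (n * K + 1)"
      by (rule divide_strict_right_mono[OF _ pos]) simp
    ultimately show False by linarith
  qed
qed

definition pa :: "nat \<Rightarrow> nat \<Rightarrow> nat option" where "pa n s = (if s < n then Some s else None)"

lemma rr_bottom: "s < n \<Longrightarrow> c < n \<Longrightarrow> s \<noteq> c \<Longrightarrow> (s, c) \<in> rr n c"
  by (auto simp: rr_def key_def)

lemma stable_pa: "stable_for n {0..<n} (\<lambda>_. 1) (rr n) (uu n) (pa n) w \<longleftrightarrow> (\<forall>s<n. w s \<in> Bset n s s)"
proof -
  have hold: "{s' \<in> students n. pa n s' = Some c} = {c}" if "c < n" for c
    using that by (auto simp: pa_def students_def)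
  show ?thesis
  proof
    assume st: "stable_for n {0..<n} (\<lambda>_. 1) (rr n) (uu n) (pa n) w"
    show "\<forall>s<n. w s \<in> Bset n s s"
    proof (intro allI impI)
      fix s assume s: "s < n"
      show "w s \<in> Bset n s s" unfolding Bset_def
      proof (intro CollectI ballI impI)
        fix c assume c: "c \<in> {0..<n}" "c \<noteq> s"
        show "score (uu n) s (w s) c \<le> score (uu n) s (w s) s"
        proof (rule ccontr)
          assume "\<not> ?thesis"
          hence sp: "sprefers (uu n) s (w s) c (pa n s)" using s by (auto simp: sprefers_def pa_def)
          have "\<exists>s'\<in>students n. pa n s' = Some c \<and> (s, s') \<in> rr n c"
            using c s rr_bottom[of s n c] by (auto simp: pa_def students_def)
          moreover have "s \<in> {0..<n}" using s by simp
          ultimately show False using st sp s c unfolding stable_for_def students_def by blast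
        qed
      qed
    qed
  next
    assume all: "\<forall>s<n. w s \<in> Bset n s s"
    show "stable_for n {0..<n} (\<lambda>_. 1) (rr n) (uu n) (pa n) w"
      unfolding stable_for_def
    proof (rule notI, elim bexE conjE)
      fix s c assume s: "s \<in> students n" and c: "c \<in> {0..<n}" and sp: "sprefers (uu n) s (w s) c (pa n s)"
      have sn: "s < n" using s by (simp add: students_def)
      have gt: "score (uu n) s (w s) c > score (uu n) s (w s) s" using sp sn by (simp add: sprefers_def pa_def)
      hence "c \<noteq> s" by auto
      moreover have "w s \<in> Bset n s s" using all sn by auto
      ultimately have "score (uu n) s (w s) c \<le> score (uu n) s (w s) s" using c unfolding Bset_def by auto
      with gt show False by linarith
    qed
  qed
qed

lemma ProS_pa: "ProS n {0..<n} (\<lambda>_. 1) (rr n) (uu n) (mu n K) (pa n) = (real (K + 1) / real (n * K + 1)) ^ n"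
proof -
  have ps: "\<And>i. prob_space (mu n K i)" by (rule prob_mu)
  have sf: "\<And>i. sigma_finite_measure (mu n K i)" using ps by (simp add: prob_space_imp_sigma_finite)
  interpret product_prob_space "mu n K" "students n"
    by (simp add: product_prob_space_def product_sigma_finite_def product_prob_space_axioms_def sf ps)
  interpret finite_product_prob_space "mu n K" "students n"
    by (simp add: finite_product_prob_space_def finite_product_sigma_finite_def finite_product_sigma_finite_axioms_def
        product_prob_space_axioms product_sigma_finite_axioms students_def)
  have "{w \<in> space (PiM (students n) (mu n K)). stable_for n {0..<n} (\<lambda>_. 1) (rr n) (uu n) (pa n) w}
     = {w \<in> space (PiM (students n) (mu n K)). \<forall>s<n. w s \<in> Bset n s s}"
    by (simp only: stable_pa)
  also have "\<dots> = PiE (students n) (\<lambda>s. Bset n s s)"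
    by (auto simp: space_PiM students_def PiE_iff extensional_def)
  finally have eq: "{w \<in> space (PiM (students n) (mu n K)). stable_for n {0..<n} (\<lambda>_. 1) (rr n) (uu n) (pa n) w}
     = PiE (students n) (\<lambda>s. Bset n s s)" .
  have "ProS n {0..<n} (\<lambda>_. 1) (rr n) (uu n) (mu n K) (pa n) = (\<Prod>s\<in>students n. measure (mu n K s) (Bset n s s))"
    unfolding ProS_def eq by (simp add: prob_times Bset_borel)
  also have "\<dots> = (\<Prod>s\<in>students n. real (K + 1) / real (n * K + 1))"
  proof (rule prod.cong)
    fix s assume "s \<in> students n"
    hence s: "s < n" by (simp add: students_def)
    have "measure (mu n K s) (Bset n s s) = herf_prob {0..<n} (uu n) (mu n K) s {} s"
      unfolding herf_prob_def Bset_def by simp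
    then show "measure (mu n K s) (Bset n s s) = real (K + 1) / real (n * K + 1)"
      using herf_val[OF s s] by simp
  qed simp
  finally show ?thesis by (simp add: students_def)
qed



definition po :: "nat \<Rightarrow> nat \<Rightarrow> nat option" where
  "po n s = (if s < n then Some (if s = n - 1 then 0 else s + 1) else None)"

lemma po_holder: "c < n \<Longrightarrow> {s' \<in> students n. po n s' = Some c} = {topst n c}"
  by (auto simp: po_def students_def topst_def split: if_splits)

lemma rr_top: "(s, topst n c) \<notin> rr n c"
  by (auto simp: rr_def key_def topst_def split: if_splits)

lemma po_matching: "is_matching n {0..<n} (\<lambda>_. 1) (po n)"
proof -
  have "\<forall>c\<in>{0..<n}. card {s\<in>students n. po n s = Some c} \<le> 1"
    using po_holder by simp
  moreover have "\<forall>s. s \<notin> students n \<longrightarrow> po n s = None" by (simp add: po_def students_def)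
  moreover have "\<forall>s c. po n s = Some c \<longrightarrow> c \<in> {0..<n}" by (auto simp: po_def split: if_splits)
  ultimately show ?thesis unfolding is_matching_def by blast
qed

lemma po_stable: "stable_for n {0..<n} (\<lambda>_. 1) (rr n) (uu n) (po n) w"
  unfolding stable_for_def
proof (rule notI, elim bexE conjE)
  fix s c assume c: "c \<in> {0..<n}" and d: "card {s' \<in> students n. po n s' = Some c} < 1 \<or>
          (\<exists>s'\<in>students n. po n s' = Some c \<and> (s, s') \<in> rr n c)"
  have h: "{s' \<in> students n. po n s' = Some c} = {topst n c}" using c po_holder by simp
  show False
  proof (cases "card {s' \<in> students n. po n s' = Some c} < 1")
    case True
    then show False unfolding h by simp
  next
    case False
    then obtain s' where "s' \<in> {s' \<in> students n. po n s' = Some c}" "(s, s') \<in> rr n c" using d by auto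
    then show False unfolding h using rr_top by auto
  qed
qed

lemma ProS_po: "ProS n {0..<n} (\<lambda>_. 1) (rr n) (uu n) (mu n K) (po n) = 1"
proof -
  interpret prob_space "PiM (students n) (mu n K)" by (rule prob_space_PiM) (rule prob_mu)
  show ?thesis unfolding ProS_def using po_stable by (simp add: prob_space)
qed

lemma finite_matchings: "finite {\<pi>. is_matching n M x \<pi>}" if "finite M"
proof (rule finite_subset)
  show "{\<pi>. is_matching n M x \<pi>} \<subseteq> {f. \<forall>s. (s \<in> students n \<longrightarrow> f s \<in> insert None (Some ` M)) \<and> (s \<notin> students n \<longrightarrow> f s = None)}"
    by (auto simp: is_matching_def)
  show "finite {f. \<forall>s. (s \<in> students n \<longrightarrow> f s \<in> insert None (Some ` M)) \<and> (s \<notin> students n \<longrightarrow> f s = None)}"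
    by (rule finite_set_of_finite_funs) (auto simp: students_def that)
qed

lemma OPT_ge: "OPT n {0..<n} (\<lambda>_. 1) (rr n) (uu n) (mu n K) \<ge> 1"
proof -
  have fin: "finite (ProS n {0..<n} (\<lambda>_. 1) (rr n) (uu n) (mu n K) ` {\<pi>. is_matching n {0..<n} (\<lambda>_. 1) \<pi>})"
    by (intro finite_imageI finite_matchings) simp
  have mem: "ProS n {0..<n} (\<lambda>_. 1) (rr n) (uu n) (mu n K) (po n) \<in> ProS n {0..<n} (\<lambda>_. 1) (rr n) (uu n) (mu n K) ` {\<pi>. is_matching n {0..<n} (\<lambda>_. 1) \<pi>}"
    using po_matching by blast
  show ?thesis unfolding OPT_def using Max_ge[OF fin mem] ProS_po[of n K] by simp
qed

lemma valid: "valid_instance n {0..<n} (\<lambda>_. 1) rr' (uu n) (mu n K)"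
  if "rr' = rr n"
proof -
  have u: "0 \<le> uu n s f c \<and> uu n s f c \<le> 1" if "c < n" for s f c
  proof -
    have t: "0 \<le> tt n c" "tt n c \<le> 1" using tt_bounds[OF that] by auto
    have "0 \<le> (tt n c)^2" "(tt n c)^2 \<le> 1" "(tt n c)^2 \<le> tt n c"
      using t by (auto simp: power2_eq_square mult_le_one mult_left_le)
    have "0 \<le> (tt n c - 1)^2" by simp
    hence h: "2 * tt n c - (tt n c)^2 \<le> 1" by (simp add: power2_diff)
    show ?thesis
    proof (cases f)
      case True
      then show ?thesis unfolding uu_def using t h \<open>(tt n c)^2 \<le> tt n c\<close> by simp
    next
      case False
      have a1: "0 \<le> (1 - (tt n c)^2) / 2" using \<open>(tt n c)^2 \<le> 1\<close> by simp
      have a0: "1 - (tt n c)^2 \<le> 2" using \<open>0 \<le> (tt n c)^2\<close> by linarith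
      hence a2: "(1 - (tt n c)^2) / 2 \<le> 1" by simp
      show ?thesis unfolding uu_def using False a1 a2 by simp
    qed
  qed
  have ae: "AE w in mu n K s. 0 \<le> w \<and> w \<le> 1" if "s < n" for s
  proof -
    have "AE p in measure_pmf (pmf_of_set (SS n K s)). 0 \<le> tt n (fst p) \<and> tt n (fst p) \<le> 1"
    proof (rule AE_pmfI)
      fix p assume "p \<in> set_pmf (pmf_of_set (SS n K s))"
      hence "p \<in> SS n K s" using SS_fin SS_ne by auto
      hence "fst p < n" using that by (auto simp: SS_def)
      then show "0 \<le> tt n (fst p) \<and> tt n (fst p) \<le> 1" by (rule tt_bounds)
    qed
    then show ?thesis unfolding mu_def
      by (subst AE_distr_iff) auto
  qed
  have sub: "rr n c \<subseteq> students n \<times> students n" for c by (auto simp: rr_def students_def)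
  show ?thesis unfolding valid_instance_def that
  proof (intro conjI ballI allI impI)
    show "finite {0..<n}" by simp
  next
    fix c :: nat show "1 \<le> (1::nat)" by simp
  next
    fix c show "rr n c \<subseteq> students n \<times> students n" by (rule sub)
  next
    fix c show "strict_linear_order_on (students n) (rr n c)" by (rule rr_order)
  next
    fix s f c assume "s \<in> students n" "c \<in> {0..<n}"
    then show "0 \<le> uu n s f c" "uu n s f c \<le> 1" using u[of c s f] by auto
  next
    fix s assume "s \<in> students n"
    then show "prob_space (mu n K s)" "sets (mu n K s) = sets borel" "AE w in mu n K s. 0 \<le> w \<and> w \<le> 1"
      using prob_mu ae by (auto simp: students_def)
  qed
qed



lemma powdiff: "0 \<le> b \<Longrightarrow> b \<le> a \<Longrightarrow> a \<le> (1::real) \<Longrightarrow> a ^ m - b ^ m \<le> real m * (a - b)"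
proof (induction m)
  case 0 then show ?case by simp
next
  case (Suc m)
  have ih: "a ^ m - b ^ m \<le> real m * (a - b)" using Suc by simp
  have d: "0 \<le> a ^ m - b ^ m" using Suc.prems by (simp add: power_mono)
  have bm: "b ^ m \<le> 1" using Suc.prems by (simp add: power_le_one)
  have "a ^ Suc m - b ^ Suc m = a * (a ^ m - b ^ m) + (a - b) * b ^ m" by (simp add: algebra_simps)
  also have "\<dots> \<le> 1 * (a ^ m - b ^ m) + (a - b) * 1"
    using Suc.prems d bm by (intro add_mono mult_right_mono mult_left_mono) auto
  also have "\<dots> \<le> real (Suc m) * (a - b)" using ih by (simp add: algebra_simps)
  finally show ?case .
qed

lemma arith_bound:
  assumes e: "\<epsilon> > 0"
  shows "(real (nat \<lceil>real n / \<epsilon>\<rceil> + 1) / real (n * nat \<lceil>real n / \<epsilon>\<rceil> + 1)) ^ n \<le> (1 / real n) ^ n + \<epsilon>"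
proof (cases "n = 0")
  case True then show ?thesis using e by simp
next
  case False
  define K where "K = nat \<lceil>real n / \<epsilon>\<rceil>"
  have n1: "real n \<ge> 1" using False by simp
  have Kge: "real K \<ge> real n / \<epsilon>" unfolding K_def by linarith
  define q where "q = real (K + 1) / real (n * K + 1)"
  have den: "real (n * K + 1) = real n * real K + 1" by simp
  have dpos: "0 < real n * real K + 1" by (rule add_nonneg_pos) simp_all
  have Kn: "1 * real K \<le> real n * real K" by (rule mult_right_mono) (use n1 in auto)
  have qa: "q = (real K + 1) / (real n * real K + 1)" unfolding q_def den by simp
  have q1: "q \<le> 1" unfolding qa using Kn dpos by (simp add: pos_divide_le_eq)
  have e1: "real n * q - 1 = (real n - 1) / (real n * real K + 1)"
    unfolding qa using dpos by (simp add: field_simps)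
  have e1': "0 \<le> (real n - 1) / (real n * real K + 1)" using n1 dpos by simp
  have qb: "1 / real n \<le> q"
  proof -
    have "1 \<le> q * real n" using e1 e1' by (simp add: algebra_simps)
    then show ?thesis using n1 by (simp add: divide_le_eq)
  qed
  have e2: "real n \<le> \<epsilon> * real K" using Kge e by (simp add: field_simps)
  have e4: "real n * real n \<le> real n * (\<epsilon> * real K)" by (rule mult_left_mono[OF e2]) simp
  have e5: "real n \<le> real n * real n" using mult_right_mono[OF n1, of "real n"] by simp
  have e6: "\<epsilon> * (real n * real K + 1) = real n * (\<epsilon> * real K) + \<epsilon>" by (simp add: algebra_simps)
  have e3: "real n - 1 \<le> \<epsilon> * (real n * real K + 1)" using e4 e5 e6 e by linarith
  have e7: "(real n - 1) / (real n * real K + 1) \<le> \<epsilon>"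
    using e3 dpos by (simp add: pos_divide_le_eq mult.commute)
  have "q ^ n - (1 / real n) ^ n \<le> real n * (q - 1 / real n)"
    by (rule powdiff) (use qb q1 n1 in auto)
  also have "\<dots> = real n * q - 1" using n1 by (simp add: algebra_simps)
  also have "\<dots> \<le> \<epsilon>" using e1 e7 by simp
  finally show ?thesis unfolding q_def K_def by simp
qed


theorem proposition3:
  fixes n :: nat
  shows "\<forall>\<epsilon>>0. \<exists>M x r u \<mu>. valid_instance n M x r u \<mu> \<and> 0 < OPT n M x r u \<mu> \<and>
           (\<forall>nx. herf_rule n M u \<mu> nx \<longrightarrow>
              ProS n M x r u \<mu> (alg_out n M x r nx)
                \<le> ((1 / real n) ^ n + \<epsilon>) * OPT n M x r u \<mu>)"
proof (intro allI impI)
  fix \<epsilon> :: real assume e: "\<epsilon> > 0"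
  define K where "K = nat \<lceil>real n / \<epsilon>\<rceil>"
  have opt: "OPT n {0..<n} (\<lambda>_. 1) (rr n) (uu n) (mu n K) \<ge> 1" by (rule OPT_ge)
  have b: "((1 / real n) ^ n + \<epsilon>) \<ge> 0" using e by simp
  have main: "ProS n {0..<n} (\<lambda>_. 1) (rr n) (uu n) (mu n K) (alg_out n {0..<n} (\<lambda>_. 1) (rr n) nx)
      \<le> ((1 / real n) ^ n + \<epsilon>) * OPT n {0..<n} (\<lambda>_. 1) (rr n) (uu n) (mu n K)"
    if h: "herf_rule n {0..<n} (uu n) (mu n K) nx" for nx
  proof -
    have "alg_out n {0..<n} (\<lambda>_. 1) (rr n) nx = pa n"
      unfolding pa_def by (rule alg_out_eq[of n nx, OF herf_nx[OF h]])
    hence "ProS n {0..<n} (\<lambda>_. 1) (rr n) (uu n) (mu n K) (alg_out n {0..<n} (\<lambda>_. 1) (rr n) nx)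
        = (real (K + 1) / real (n * K + 1)) ^ n" by (simp only: ProS_pa)
    also have "\<dots> \<le> (1 / real n) ^ n + \<epsilon>" unfolding K_def by (rule arith_bound[OF e])
    also have "\<dots> \<le> ((1 / real n) ^ n + \<epsilon>) * OPT n {0..<n} (\<lambda>_. 1) (rr n) (uu n) (mu n K)"
      using mult_left_mono[OF opt b] by simp
    finally show ?thesis .
  qed
  show "\<exists>M x r u \<mu>. valid_instance n M x r u \<mu> \<and> 0 < OPT n M x r u \<mu> \<and>
           (\<forall>nx. herf_rule n M u \<mu> nx \<longrightarrow>
              ProS n M x r u \<mu> (alg_out n M x r nx)
                \<le> ((1 / real n) ^ n + \<epsilon>) * OPT n M x r u \<mu>)"
    apply (rule exI[of _ "{0..<n}"], rule exI[of _ "\<lambda>_. 1"], rule exI[of _ "rr n"],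
           rule exI[of _ "uu n"], rule exI[of _ "mu n K"])
    using valid[OF refl, of n K] opt main by auto
qed

end
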